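(* Let $m<n$, let $A\in\mathbb{R}^{m\times n}$ and $b\in\mathbb{R}^{m}$, and assume that the system $Ax=b$ has a solution. Partition $A=[B~\tilde{B}]$ with $B\in\mathbb{R}^{m\times m}$ and $\tilde{B}\in\mathbb{R}^{m\times(n-m)}$. Assume that every diagonal entry of $B$ is nonzero and that every row $\tilde{B}_i$ of $\tilde{B}$ is nonzero. Let $D=\operatorname{diag}(B)$ (the diagonal matrix with the diagonal of $B$), $R=B-D$, $N(\tilde{B})=\operatorname{diag}(\|\tilde{B}_1\|_1,\ldots,\|\tilde{B}_m\|_1)$, and let $s(\tilde{B})\in\mathbb{R}^{(n-m)\times m}$ be the matrix whose $(j,i)$ entry is the sign ($1$, $0$ or $-1$) of the $(j,i)$ entry of $\tilde{B}^T$. Starting from any $x^{(0)}=\begin{bmatrix}x_1^{(0)}\\ x_2^{(0)}\end{bmatrix}$ with $x_1^{(0)}\in\mathbb{R}^m$, $x_2^{(0)}\in\mathbb{R}^{n-m}$, define for $k\ge 0$ the generalized Jacobi iteration $$x_2^{(k+1)}=x_2^{(k)}+s(\tilde{B})\,d^{(k)},\qquad d^{(k)}_i=\frac{b_i-B_ix_1^{(k)}-\tilde{B}_ix_2^{(k)}}{m\|\tilde{B}_i\|_1}\ (i=1,\ldots,m),$$ $$x_1^{(k+1)}=D^{-1}\big(-Rx_1^{(k)}+b-\tilde{B}x_2^{(k+1)}\big),\qquad x^{(k+1)}=\begin{bmatrix}x_1^{(k+1)}\\ x_2^{(k+1)}\end{bmatrix},$$ where $B_i,\tilde{B}_i$ denote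 the $i$th rows of $B,\tilde{B}$. If, for some matrix norm $\|\cdot\|$ on $\mathbb{R}^{m\times m}$, $$\|I-BD^{-1}\|<1\quad\text{and}\quad \|mI-\tilde{B}\,s(\tilde{B})\,N(\tilde{B})^{-1}\|<m,$$ then the sequence $(x^{(k)})$ converges and its limit $x=\lim_k x^{(k)}$ is a solution of $Ax=b$.
   Context: $\|\cdot\|_1$ denotes the $\ell_1$-norm of a vector. The $x_2$-update is the iterative method of Wheaton–Awoniyi applied to $\tilde{B}y=b-Bx_1^{(k)}$, and the $x_1$-update is one Jacobi step for $Bz=b-\tilde{B}x_2^{(k+1)}$ starting at $x_1^{(k)}$. *)

theory Defs
  imports "HOL-Analysis.Analysis"
begin

text \<open>A matrix norm on square real matrices: a norm on the vector space of
  matrices which is submultiplicative (Horn--Johnson convention).\<close>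
definition matrix_norm :: "(real^'m^'m \<Rightarrow> real) \<Rightarrow> bool" where
  "matrix_norm nm \<longleftrightarrow>
     (\<forall>M. 0 \<le> nm M) \<and>
     (\<forall>M. nm M = 0 \<longleftrightarrow> M = 0) \<and>
     (\<forall>c M. nm (c *\<^sub>R M) = \<bar>c\<bar> * nm M) \<and>
     (\<forall>M N. nm (M + N) \<le> nm M + nm N) \<and>
     (\<forall>M N. nm (M ** N) \<le> nm M * nm N)"

definition diag_part :: "real^'m^'m \<Rightarrow> real^'m^'m" where
  "diag_part B = (\<chi> i j. if i = j then B $ i $ i else 0)"

definition l1norm :: "real^'n \<Rightarrow> real" where
  "l1norm v = (\<Sum>j\<in>UNIV. \<bar>v $ j\<bar>)"

definition row_l1_diag :: "real^'k^'m \<Rightarrow> real^'m^'m" where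
  "row_l1_diag Bt = (\<chi> i j. if i = j then l1norm (Bt $ i) else 0)"

definition sign_transpose :: "real^'k^'m \<Rightarrow> real^'m^'k" where
  "sign_transpose Bt = (\<chi> j i. sgn (Bt $ i $ j))"

definition vjoin :: "real^'m \<Rightarrow> real^'k \<Rightarrow> real^('m + 'k)" where
  "vjoin x1 x2 = (\<chi> p. case p of Inl i \<Rightarrow> x1 $ i | Inr j \<Rightarrow> x2 $ j)"

end

theory Submission imports Defs begin

definition dmat :: "('m::finite \<Rightarrow> real) \<Rightarrow> real^'m^'m" where
  "dmat d = (\<chi> i j. if i = j then d i else 0)"

lemma dmat_mult: "dmat d ** dmat e = dmat (\<lambda>i. d i * e i)"
  unfolding dmat_def matrix_matrix_mult_def
  by (simp add: vec_eq_iff if_distrib[where f="\<lambda>x. x * _"] cong: if_cong)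

lemma dmat_one: "dmat (\<lambda>i. 1) = mat 1"
  unfolding dmat_def mat_def by simp

lemma matrix_inv_dmat:
  assumes "\<forall>i. d i \<noteq> 0"
  shows "matrix_inv (dmat d) = dmat (\<lambda>i. 1 / d i)"
proof -
  let ?E = "dmat (\<lambda>i. 1 / d i)"
  have h1: "dmat d ** ?E = mat 1" "?E ** dmat d = mat 1"
    using assms by (simp_all add: dmat_mult dmat_one[symmetric])
  then have ex: "\<exists>A'. dmat d ** A' = mat 1 \<and> A' ** dmat d = mat 1" by blast
  define X where "X = matrix_inv (dmat d)"
  have X: "dmat d ** X = mat 1 \<and> X ** dmat d = mat 1"
    unfolding X_def matrix_inv_def by (rule someI_ex[OF ex])
  have "X = X ** (dmat d ** ?E)" using h1 by (simp add: matrix_mul_rid)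
  also have "\<dots> = (X ** dmat d) ** ?E" by (simp add: matrix_mul_assoc)
  also have "\<dots> = ?E" using X by (simp add: matrix_mul_lid)
  finally show ?thesis unfolding X_def .
qed

lemma dmat_vec: "dmat d *v v = (\<chi> i. d i * v $ i)"
  unfolding dmat_def matrix_vector_mult_def
  by (simp add: vec_eq_iff if_distrib[where f="\<lambda>x. x * _"] cong: if_cong)

definition Emat :: "'m::finite \<Rightarrow> 'm \<Rightarrow> real^'m^'m" where
  "Emat i j = (\<chi> a b. if a = i \<and> b = j then 1 else 0)"

lemma Emat_sandwich: "Emat i i ** M ** Emat j j = M $ i $ j *\<^sub>R Emat i j"
  unfolding Emat_def matrix_matrix_mult_def
  by (auto simp add: vec_eq_iff if_distrib[where f="\<lambda>x. x * _"] if_distrib[where f="\<lambda>x. _ * x"] sum.If_cases cong: if_cong)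

lemma entry_bound:
  assumes "matrix_norm nm"
  shows "\<exists>K\<ge>0. \<forall>M. \<bar>M $ i $ j\<bar> \<le> K * nm M"
proof -
  from assms have n0: "\<forall>M. 0 \<le> nm M" and nz: "\<forall>M. nm M = 0 \<longleftrightarrow> M = 0"
    and hom: "\<forall>c M. nm (c *\<^sub>R M) = \<bar>c\<bar> * nm M"
    and sub: "\<forall>M N. nm (M ** N) \<le> nm M * nm N"
    unfolding matrix_norm_def by blast+
  have "Emat i j \<noteq> 0" unfolding Emat_def by (auto simp: vec_eq_iff)
  then have pos: "nm (Emat i j) > 0" using n0 nz by (metis less_eq_real_def)
  let ?K = "nm (Emat i i) * nm (Emat j j) / nm (Emat i j)"
  have "\<bar>M $ i $ j\<bar> \<le> ?K * nm M" for M
  proof -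
    have "\<bar>M $ i $ j\<bar> * nm (Emat i j) = nm (Emat i i ** M ** Emat j j)"
      using hom by (simp add: Emat_sandwich)
    also have "\<dots> \<le> nm (Emat i i ** M) * nm (Emat j j)" using sub by blast
    also have "\<dots> \<le> nm (Emat i i) * nm M * nm (Emat j j)"
      using sub n0 by (simp add: mult_right_mono)
    finally show ?thesis using pos by (simp add: field_simps)
  qed
  moreover have "?K \<ge> 0" using n0 pos by simp
  ultimately show ?thesis by blast
qed

lemma conv_geom:
  fixes f :: "nat \<Rightarrow> 'a::banach"
  assumes "\<And>k. norm (f (Suc k) - f k) \<le> K * q ^ k" "0 \<le> q" "q < 1"
  shows "\<exists>L. f \<longlonglongrightarrow> L"
proof -
  have "summable (\<lambda>k. K * q ^ k)" using assms by (simp add: summable_mult)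
  then have "summable (\<lambda>k. f (Suc k) - f k)"
    using assms(1) by (rule summable_comparison_test'[where N=0])
  then have "(\<lambda>n. \<Sum>k<n. f (Suc k) - f k) \<longlonglongrightarrow> (\<Sum>k. f (Suc k) - f k)"
    by (rule summable_LIMSEQ)
  then have "(\<lambda>n. f 0 + (\<Sum>k<n. f (Suc k) - f k)) \<longlonglongrightarrow> f 0 + (\<Sum>k. f (Suc k) - f k)"
    by (intro tendsto_add tendsto_const)
  then show ?thesis by (auto simp: sum_lessThan_telescope)
qed

lemma vjoin_mult:
  fixes A :: "real^('m::finite + 'k::finite)^'n::finite"
  shows "A *v vjoin u w = (\<chi> i j. A $ i $ Inl j) *v u + (\<chi> i j. A $ i $ Inr j) *v w"
  unfolding vjoin_def matrix_vector_mult_def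
  by (simp add: vec_eq_iff UNIV_Plus_UNIV[symmetric] sum.Plus del: UNIV_Plus_UNIV)

lemma lin_bound:
  fixes G :: "real^'n::finite^'m::finite"
  assumes "\<forall>j. \<bar>v $ j\<bar> \<le> C j * t"
  shows "\<bar>(G *v v) $ i\<bar> \<le> (\<Sum>j\<in>UNIV. \<bar>G $ i $ j\<bar> * C j) * t"
proof -
  have "\<bar>(G *v v) $ i\<bar> \<le> (\<Sum>j\<in>UNIV. \<bar>G $ i $ j * v $ j\<bar>)"
    unfolding matrix_vector_mult_def by (simp add: sum_abs)
  also have "\<dots> \<le> (\<Sum>j\<in>UNIV. \<bar>G $ i $ j\<bar> * (C j * t))"
    by (intro sum_mono) (simp add: abs_mult assms mult_left_mono)
  also have "\<dots> = (\<Sum>j\<in>UNIV. \<bar>G $ i $ j\<bar> * C j) * t"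
    by (simp add: sum_distrib_right mult.assoc)
  finally show ?thesis .
qed

theorem mainTheorem1:
  fixes A :: "real^('m::finite + 'k::finite)^'m"
    and b :: "real^'m"
    and B :: "real^'m^'m" and Bt :: "real^'k^'m"
    and x1 :: "nat \<Rightarrow> real^'m" and x2 :: "nat \<Rightarrow> real^'k"
    and nm :: "real^'m^'m \<Rightarrow> real"
  assumes solvable: "\<exists>x. A *v x = b"
    and B_def: "B = (\<chi> i j. A $ i $ Inl j)"
    and Bt_def: "Bt = (\<chi> i j. A $ i $ Inr j)"
    and diag_nz: "\<forall>i. B $ i $ i \<noteq> 0"
    and rows_nz: "\<forall>i. Bt $ i \<noteq> 0"
    and step2: "\<forall>k. x2 (Suc k) = x2 k + sign_transpose Bt *v
                   (\<chi> i. (b $ i - (B *v x1 k) $ i - (Bt *v x2 k) $ i) /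
                          (real CARD('m) * l1norm (Bt $ i)))"
    and step1: "\<forall>k. x1 (Suc k) = matrix_inv (diag_part B) *v
                   (- ((B - diag_part B) *v x1 k) + b - Bt *v x2 (Suc k))"
    and mnorm: "matrix_norm nm"
    and c1: "nm (mat 1 - B ** matrix_inv (diag_part B)) < 1"
    and c2: "nm (mat (real CARD('m)) - Bt ** sign_transpose Bt ** matrix_inv (row_l1_diag Bt))
             < real CARD('m)"
  shows "\<exists>x. ((\<lambda>k. vjoin (x1 k) (x2 k)) \<longlonglongrightarrow> x) \<and> A *v x = b"
proof -
  from mnorm have n0: "\<forall>M. 0 \<le> nm M"
    and hom: "\<forall>c M. nm (c *\<^sub>R M) = \<bar>c\<bar> * nm M"
    and sub: "\<forall>M N. nm (M ** N) \<le> nm M * nm N"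
    unfolding matrix_norm_def by blast+
  define m where "m = real CARD('m)"
  have mpos: "m > 0" unfolding m_def by simp
  define S where "S = sign_transpose Bt"
  define D where "D = diag_part B"
  define l where "l = (\<lambda>i. l1norm (Bt $ i))"
  have lpos: "l i > 0" for i
  proof -
    obtain j where "Bt $ i $ j \<noteq> 0" using rows_nz by (metis vec_eq_iff zero_index)
    then show ?thesis unfolding l_def l1norm_def
      by (intro sum_pos2[of UNIV j]) auto
  qed
  have Deq: "D = dmat (\<lambda>i. B $ i $ i)" unfolding D_def diag_part_def dmat_def by simp
  define Di where "Di = dmat (\<lambda>i. 1 / B $ i $ i)"
  have Dinv: "matrix_inv D = Di" unfolding Deq Di_def using diag_nz by (simp add: matrix_inv_dmat)
  have DiD: "Di ** D = mat 1" unfolding Di_def Deq using diag_nz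
    by (simp add: dmat_mult dmat_one[symmetric])
  have Neq: "row_l1_diag Bt = dmat l" unfolding row_l1_diag_def dmat_def l_def by simp
  define Ni where "Ni = dmat (\<lambda>i. 1 / l i)"
  have Ninv: "matrix_inv (row_l1_diag Bt) = Ni" unfolding Neq Ni_def
    using lpos by (simp add: matrix_inv_dmat less_imp_neq[symmetric])
  define M1 where "M1 = mat 1 - B ** Di"
  define M2 where "M2 = mat 1 - (1/m) *\<^sub>R (Bt ** S ** Ni)"
  have "M2 = (1/m) *\<^sub>R (mat m - Bt ** S ** Ni)"
    unfolding M2_def using mpos by (simp add: scaleR_diff_right vec_eq_iff mat_def)
  then have nM2: "nm M2 < 1" using c2 hom mpos unfolding m_def S_def Ninv
    by (simp add: divide_simps)
  have nM1: "nm M1 < 1" using c1 unfolding M1_def D_def[symmetric] Dinv .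
  define P where "P = M1 ** M2"
  define q where "q = nm P"
  have q0: "0 \<le> q" unfolding q_def using n0 by simp
  have q1: "q < 1"
  proof -
    have "q \<le> nm M1 * nm M2" unfolding q_def P_def using sub by blast
    also have "\<dots> < 1" using nM1 nM2 n0
      by (metis less_eq_real_def mult_le_one mult_strict_mono' zero_less_one mult_1_right)
    finally show ?thesis .
  qed
  define r where "r = (\<lambda>k. b - B *v x1 k - Bt *v x2 k)"
  have x2s: "x2 (Suc k) = x2 k + (1/m) *\<^sub>R (S *v (Ni *v r k))" for k
  proof -
    have "(\<chi> i. (b $ i - (B *v x1 k) $ i - (Bt *v x2 k) $ i) /
                          (real CARD('m) * l1norm (Bt $ i))) = (1/m) *\<^sub>R (Ni *v r k)"
      unfolding Ni_def dmat_vec r_def m_def l_def by (simp add: vec_eq_iff field_simps)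
    then show ?thesis using step2 unfolding S_def
      by (simp add: scaleR_matrix_vector_assoc[symmetric] matrix_vector_mult_scaleR)
  qed
  define r' where "r' = (\<lambda>k. b - B *v x1 k - Bt *v x2 (Suc k))"
  have r'eq: "r' k = M2 *v r k" for k
    unfolding r'_def x2s M2_def r_def
    by (simp add: matrix_vector_mult_diff_rdistrib matrix_vector_right_distrib
        matrix_vector_mult_diff_distrib matrix_vector_mul_assoc[symmetric]
        scaleR_matrix_vector_assoc[symmetric] matrix_vector_mult_scaleR algebra_simps)
  have x1s: "x1 (Suc k) = x1 k + Di *v r' k" for k
  proof -
    have "- ((B - D) *v x1 k) + b - Bt *v x2 (Suc k) = D *v x1 k + r' k"
      unfolding r'_def by (simp add: matrix_vector_mult_diff_rdistrib algebra_simps)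
    then have "x1 (Suc k) = Di *v (D *v x1 k + r' k)"
      using step1 unfolding D_def[symmetric] Dinv by simp
    also have "\<dots> = x1 k + Di *v r' k"
      by (simp add: matrix_vector_right_distrib matrix_vector_mul_assoc DiD)
    finally show ?thesis .
  qed
  have rs: "r (Suc k) = P *v r k" for k
  proof -
    have "r (Suc k) = r' k - B *v (Di *v r' k)"
      unfolding r_def r'_def x1s by (simp add: matrix_vector_right_distrib algebra_simps)
    also have "\<dots> = M1 *v r' k"
      unfolding M1_def by (simp add: matrix_vector_mult_diff_rdistrib matrix_vector_mul_assoc)
    finally show ?thesis unfolding P_def r'eq by (simp add: matrix_vector_mul_assoc)
  qed
  define pw where "pw = (\<lambda>k. ((\<lambda>M. P ** M) ^^ k) (mat 1))"
  have rpw: "r k = pw k *v r 0" for k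
    by (induction k) (simp_all add: pw_def rs matrix_vector_mul_assoc)
  have npw: "nm (pw k) \<le> nm (mat 1) * q ^ k" for k
  proof (induction k)
    case 0 then show ?case by (simp add: pw_def)
  next
    case (Suc k)
    have "nm (pw (Suc k)) \<le> q * nm (pw k)" unfolding pw_def q_def using sub by simp
    also have "\<dots> \<le> q * (nm (mat 1) * q ^ k)" using Suc q0 by (simp add: mult_left_mono)
    finally show ?case by (simp add: algebra_simps)
  qed
  have "\<forall>i j. \<exists>K\<ge>0. \<forall>M. \<bar>M $ i $ j\<bar> \<le> K * nm M" using entry_bound[OF mnorm] by blast
  then obtain K where K: "\<And>i j M. \<bar>M $ i $ j\<bar> \<le> K i j * nm M" and K0: "\<And>i j. K i j \<ge> 0" by metis
  define C where "C = (\<lambda>j. \<Sum>l\<in>UNIV. K j l * nm (mat 1) * \<bar>r 0 $ l\<bar>)"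
  have rb: "\<forall>j. \<bar>r k $ j\<bar> \<le> C j * q ^ k" for k
  proof
    fix j
    have "\<bar>r k $ j\<bar> \<le> (\<Sum>l\<in>UNIV. \<bar>pw k $ j $ l * r 0 $ l\<bar>)"
      by (subst rpw[of k]) (simp add: matrix_vector_mult_def sum_abs)
    also have "\<dots> \<le> (\<Sum>l\<in>UNIV. K j l * nm (mat 1) * \<bar>r 0 $ l\<bar> * q ^ k)"
    proof (intro sum_mono)
      fix l
      have "\<bar>pw k $ j $ l\<bar> \<le> K j l * nm (pw k)" by (rule K)
      also have "\<dots> \<le> K j l * (nm (mat 1) * q ^ k)"
        using npw K0 by (simp add: mult_left_mono)
      finally have "\<bar>pw k $ j $ l\<bar> * \<bar>r 0 $ l\<bar> \<le> K j l * (nm (mat 1) * q ^ k) * \<bar>r 0 $ l\<bar>"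
        by (rule mult_right_mono) simp
      then show "\<bar>pw k $ j $ l * r 0 $ l\<bar> \<le> K j l * nm (mat 1) * \<bar>r 0 $ l\<bar> * q ^ k"
        by (simp add: abs_mult mult_ac)
    qed
    also have "\<dots> = C j * q ^ k" unfolding C_def by (simp add: sum_distrib_right)
    finally show "\<bar>r k $ j\<bar> \<le> C j * q ^ k" .
  qed
  define y where "y = (\<lambda>k. vjoin (x1 k) (x2 k))"
  define G1 where "G1 = Di ** M2"
  define G2 where "G2 = (1/m) *\<^sub>R (S ** Ni)"
  have inc: "y (Suc k) - y k = vjoin (G1 *v r k) (G2 *v r k)" for k
    unfolding y_def vjoin_def G1_def G2_def x1s x2s r'eq
    by (simp add: vec_eq_iff matrix_vector_mul_assoc[symmetric] scaleR_matrix_vector_assoc[symmetric]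
        split: sum.split)
  define Cy where "Cy = (\<lambda>p. case p of Inl i \<Rightarrow> (\<Sum>j\<in>UNIV. \<bar>G1 $ i $ j\<bar> * C j)
                                   | Inr i \<Rightarrow> (\<Sum>j\<in>UNIV. \<bar>G2 $ i $ j\<bar> * C j))"
  have incb: "norm (y (Suc k) - y k) \<le> (\<Sum>p\<in>UNIV. Cy p) * q ^ k" for k
  proof -
    have "norm (y (Suc k) - y k) \<le> (\<Sum>p\<in>UNIV. \<bar>(y (Suc k) - y k) $ p\<bar>)" by (rule norm_le_l1_cart)
    also have "\<dots> \<le> (\<Sum>p\<in>UNIV. Cy p * q ^ k)"
    proof (intro sum_mono)
      fix p
      show "\<bar>(y (Suc k) - y k) $ p\<bar> \<le> Cy p * q ^ k"
        unfolding inc Cy_def vjoin_def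
        by (simp split: sum.split add: lin_bound[OF rb[of k]])
    qed
    also have "\<dots> = (\<Sum>p\<in>UNIV. Cy p) * q ^ k" by (simp add: sum_distrib_right)
    finally show ?thesis .
  qed
  obtain L where L: "y \<longlonglongrightarrow> L" using conv_geom[OF incb q0 q1] by blast
  have rn: "norm (r k) \<le> (\<Sum>j\<in>UNIV. C j) * q ^ k" for k
  proof -
    have "norm (r k) \<le> (\<Sum>j\<in>UNIV. \<bar>r k $ j\<bar>)" by (rule norm_le_l1_cart)
    also have "\<dots> \<le> (\<Sum>j\<in>UNIV. C j * q ^ k)" using rb[of k] by (intro sum_mono) simp
    also have "\<dots> = (\<Sum>j\<in>UNIV. C j) * q ^ k" by (simp add: sum_distrib_right)
    finally show ?thesis .
  qed
  have "(\<lambda>k. (\<Sum>j\<in>UNIV. C j) * q ^ k) \<longlonglongrightarrow> 0"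
    using q0 q1 by (intro tendsto_mult_right_zero LIMSEQ_power_zero) simp
  then have r0: "r \<longlonglongrightarrow> 0"
    by (rule Lim_null_comparison[rotated]) (simp add: rn)
  have Ay: "A *v y k = b - r k" for k
    unfolding y_def r_def vjoin_mult B_def Bt_def by simp
  have "(\<lambda>k. A *v y k) \<longlonglongrightarrow> A *v L"
    by (rule bounded_linear.tendsto[OF matrix_vector_mul_bounded_linear L])
  moreover have "(\<lambda>k. A *v y k) \<longlonglongrightarrow> b"
    unfolding Ay using tendsto_diff[OF tendsto_const r0, of b] by simp
  ultimately have "A *v L = b" by (rule LIMSEQ_unique)
  then show ?thesis using L unfolding y_def by blast
qed
end
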